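(* Let $E_1,E_2$ be nonempty bounded subsets of $M_a$ and $f:E_1\to E_2$ a surjective $d_a$-isometry; let $p\in E_1$ and $q=f(p)$. Let $F:\mathrm{GS}(E_1,p)\to M_a$ be the map $F\big(p+\sum_i\alpha_i(x_i-p)\big)=q+\sum_i\alpha_i(f(x_i)-q)$ ($x_i\in E_1$, $\alpha_i\in\mathbb R$, $\sum_i\alpha_i(x_i-p)\in M_a$). Then $F(\mathrm{GS}(E_1,p))=\mathrm{GS}(E_2,q)$.
   Context: Let $a=\{a_i\}$ be a sequence of positive reals with $\sum_i a_i^2<\infty$, $M_a=\{x\in\mathbb{R}^{\mathbb N}:\sum_i a_i^2x_i^2<\infty\}$ with inner product $\langle x,y\rangle_a=\sum_i a_i^2x_iy_i$, norm $\|\cdot\|_a$ and metric $d_a(x,y)=\|x-y\|_a$; a $d_a$-isometry is a map preserving $d_a$. Sums are indexed by finite or countable subsets of $\mathbb N$; infinite sums are $\|\cdot\|_a$-limits of partial sums. For $p\in E\subset M_a$, $\mathrm{GS}(E,p)=\{p+\sum_i\alpha_i(x_i-p)\in M_a: x_i\in E,\ \alpha_i\in\mathbb R\}$. (The map $F$ is well defined and is a $d_a$-isometry extending $f$.) *)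

theory Defs
  imports "HOL-Analysis.Analysis"
begin

definition Ma :: "(nat \<Rightarrow> real) \<Rightarrow> (nat \<Rightarrow> real) set" where
  "Ma a = {x. summable (\<lambda>i. (a i)^2 * (x i)^2)}"

definition norm_a :: "(nat \<Rightarrow> real) \<Rightarrow> (nat \<Rightarrow> real) \<Rightarrow> real" where
  "norm_a a x = sqrt (\<Sum>i. (a i)^2 * (x i)^2)"

definition d_a :: "(nat \<Rightarrow> real) \<Rightarrow> (nat \<Rightarrow> real) \<Rightarrow> (nat \<Rightarrow> real) \<Rightarrow> real" where
  "d_a a x y = norm_a a (\<lambda>i. x i - y i)"

definition bounded_a :: "(nat \<Rightarrow> real) \<Rightarrow> (nat \<Rightarrow> real) set \<Rightarrow> bool" where
  "bounded_a a E \<longleftrightarrow> (\<exists>c. \<forall>x\<in>E. \<forall>y\<in>E. d_a a x y \<le> c)"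

definition conv_a :: "(nat \<Rightarrow> real) \<Rightarrow> (nat \<Rightarrow> nat \<Rightarrow> real) \<Rightarrow> (nat \<Rightarrow> real) \<Rightarrow> bool" where
  "conv_a a S s \<longleftrightarrow> s \<in> Ma a \<and> (\<lambda>n. d_a a (S n) s) \<longlonglongrightarrow> 0"

text \<open>Partial sums of sum_i alpha_i (x_i - p).  Finite / countable index sets are
  encoded by sequences, padding with zero coefficients.\<close>
definition psum :: "(nat \<Rightarrow> real) \<Rightarrow> (nat \<Rightarrow> nat \<Rightarrow> real) \<Rightarrow> (nat \<Rightarrow> real) \<Rightarrow> nat \<Rightarrow> nat \<Rightarrow> real" where
  "psum \<alpha> x p n = (\<lambda>k. \<Sum>i<n. \<alpha> i * (x i k - p k))"

definition GS :: "(nat \<Rightarrow> real) \<Rightarrow> (nat \<Rightarrow> real) set \<Rightarrow> (nat \<Rightarrow> real) \<Rightarrow> (nat \<Rightarrow> real) set" where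
  "GS a E p = {y. y \<in> Ma a \<and> (\<exists>x \<alpha> s. (\<forall>i. x i \<in> E) \<and> conv_a a (psum \<alpha> x p) s
                 \<and> y = (\<lambda>k. p k + s k))}"

definition Fmap :: "(nat \<Rightarrow> real) \<Rightarrow> ((nat \<Rightarrow> real) \<Rightarrow> (nat \<Rightarrow> real)) \<Rightarrow> (nat \<Rightarrow> real) set
     \<Rightarrow> (nat \<Rightarrow> real) \<Rightarrow> (nat \<Rightarrow> real) \<Rightarrow> (nat \<Rightarrow> real)" where
  "Fmap a f E p y = (THE z. \<exists>x \<alpha> s t. (\<forall>i. x i \<in> E) \<and> conv_a a (psum \<alpha> x p) s
        \<and> y = (\<lambda>k. p k + s k)
        \<and> conv_a a (psum \<alpha> (\<lambda>i. f (x i)) (f p)) t \<and> z = (\<lambda>k. f p k + t k))"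

end

theory Submission imports Defs begin

lemma Ma_add:
  assumes "x \<in> Ma a" "y \<in> Ma a" shows "(\<lambda>k. x k + y k) \<in> Ma a"
proof -
  have s: "summable (\<lambda>i. 2 * ((a i)^2 * (x i)^2) + 2 * ((a i)^2 * (y i)^2))"
    using assms unfolding Ma_def by (intro summable_add summable_mult) auto
  show ?thesis unfolding Ma_def
  proof (rule CollectI, rule summable_comparison_test[OF _ s], intro exI allI impI)
    fix n
    have "(x n + y n)^2 \<le> 2 * (x n)^2 + 2 * (y n)^2"
    proof -
      have "0 \<le> (x n - y n)^2" by simp
      then show ?thesis by (simp add: power2_diff power2_sum)
    qed
    then have "(a n)^2 * (x n + y n)^2 \<le> (a n)^2 * (2 * (x n)^2 + 2 * (y n)^2)"
      by (intro mult_left_mono) auto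
    then show "norm ((a n)^2 * (x n + y n)^2) \<le> 2 * ((a n)^2 * (x n)^2) + 2 * ((a n)^2 * (y n)^2)"
      by (simp add: algebra_simps)
  qed
qed

lemma Ma_scale:
  assumes "x \<in> Ma a" shows "(\<lambda>k. c * x k) \<in> Ma a"
proof -
  have "summable (\<lambda>i. c^2 * ((a i)^2 * (x i)^2))"
    using assms unfolding Ma_def by (intro summable_mult) auto
  then show ?thesis unfolding Ma_def by (simp add: power_mult_distrib algebra_simps)
qed

lemma Ma_zero: "(\<lambda>k. 0) \<in> Ma a"
  unfolding Ma_def by simp

lemma Ma_diff:
  assumes "x \<in> Ma a" "y \<in> Ma a" shows "(\<lambda>k. x k - y k) \<in> Ma a"
  using Ma_add[OF assms(1) Ma_scale[OF assms(2), of "-1"]] by simp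

lemma Ma_sum:
  assumes "finite I" "\<And>i. i \<in> I \<Longrightarrow> u i \<in> Ma a"
  shows "(\<lambda>k. \<Sum>i\<in>I. c i * u i k) \<in> Ma a"
  using assms
proof (induction I rule: finite_induct)
  case empty then show ?case using Ma_zero by simp
next
  case (insert j I)
  have "(\<lambda>k. c j * u j k + (\<Sum>i\<in>I. c i * u i k)) \<in> Ma a"
    using insert by (intro Ma_add Ma_scale) auto
  then show ?case using insert by simp
qed

lemma psum_Ma:
  assumes "\<And>i. x i \<in> Ma a" "p \<in> Ma a" shows "psum \<alpha> x p n \<in> Ma a"
  unfolding psum_def by (intro Ma_sum Ma_diff assms) auto

definition ip :: "(nat \<Rightarrow> real) \<Rightarrow> (nat \<Rightarrow> real) \<Rightarrow> (nat \<Rightarrow> real) \<Rightarrow> real" where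
  "ip a x y = (\<Sum>i. (a i)^2 * x i * y i)"

lemma ip_summable:
  assumes "x \<in> Ma a" "y \<in> Ma a" shows "summable (\<lambda>i. (a i)^2 * x i * y i)"
proof -
  have s: "summable (\<lambda>i. ((a i)^2 * (x i)^2) + ((a i)^2 * (y i)^2))"
    using assms unfolding Ma_def by (intro summable_add) auto
  show ?thesis
  proof (rule summable_comparison_test[OF _ s], intro exI allI impI)
    fix n
    have "\<bar>x n * y n\<bar> \<le> (x n)^2 + (y n)^2"
    proof -
      have "0 \<le> (\<bar>x n\<bar> - \<bar>y n\<bar>)^2" by simp
      then have "2 * (\<bar>x n\<bar> * \<bar>y n\<bar>) \<le> (x n)^2 + (y n)^2"
        by (simp add: power2_diff)
      moreover have "0 \<le> \<bar>x n\<bar> * \<bar>y n\<bar>" by simp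
      moreover have "\<bar>x n * y n\<bar> = \<bar>x n\<bar> * \<bar>y n\<bar>" by (simp add: abs_mult)
      ultimately show ?thesis by linarith
    qed
    then have "(a n)^2 * \<bar>x n * y n\<bar> \<le> (a n)^2 * ((x n)^2 + (y n)^2)"
      by (intro mult_left_mono) auto
    then show "norm ((a n)^2 * x n * y n) \<le> ((a n)^2 * (x n)^2) + ((a n)^2 * (y n)^2)"
      by (simp add: algebra_simps abs_mult)
  qed
qed

lemma norm_a_ip: "norm_a a x = sqrt (ip a x x)"
  unfolding norm_a_def ip_def by (simp add: power2_eq_square mult.assoc)

lemma ip_nonneg: assumes "x \<in> Ma a" shows "ip a x x \<ge> 0"
  unfolding ip_def by (rule suminf_nonneg[OF ip_summable[OF assms assms]]) (simp add: mult.assoc)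

lemma norm_a_sq: assumes "x \<in> Ma a" shows "(norm_a a x)^2 = ip a x x"
  using ip_nonneg[OF assms] by (simp add: norm_a_ip)

lemma ip_sym: "ip a x y = ip a y x"
  unfolding ip_def by (simp add: algebra_simps)

lemma ip_sum_left:
  assumes "finite I" "\<And>i. i \<in> I \<Longrightarrow> u i \<in> Ma a" "w \<in> Ma a"
  shows "ip a (\<lambda>k. \<Sum>i\<in>I. c i * u i k) w = (\<Sum>i\<in>I. c i * ip a (u i) w)"
proof -
  have "ip a (\<lambda>k. \<Sum>i\<in>I. c i * u i k) w = (\<Sum>n. \<Sum>i\<in>I. c i * ((a n)^2 * u i n * w n))"
    unfolding ip_def by (simp add: sum_distrib_left sum_distrib_right algebra_simps)
  also have "\<dots> = (\<Sum>i\<in>I. \<Sum>n. c i * ((a n)^2 * u i n * w n))"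
    using assms by (intro suminf_sum summable_mult ip_summable) auto
  also have "\<dots> = (\<Sum>i\<in>I. c i * ip a (u i) w)"
    unfolding ip_def using assms by (intro sum.cong refl suminf_mult ip_summable) auto
  finally show ?thesis .
qed

lemma norm_sum_sq:
  assumes "finite I" "\<And>i. i \<in> I \<Longrightarrow> u i \<in> Ma a"
  shows "ip a (\<lambda>k. \<Sum>i\<in>I. c i * u i k) (\<lambda>k. \<Sum>i\<in>I. c i * u i k)
        = (\<Sum>i\<in>I. c i * (\<Sum>j\<in>I. c j * ip a (u i) (u j)))"
proof -
  let ?v = "(\<lambda>k. \<Sum>i\<in>I. c i * u i k)"
  have vM: "?v \<in> Ma a" using assms by (intro Ma_sum) auto
  have "ip a ?v ?v = (\<Sum>i\<in>I. c i * ip a (u i) ?v)"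
    using assms vM by (rule ip_sum_left)
  also have "\<dots> = (\<Sum>i\<in>I. c i * (\<Sum>j\<in>I. c j * ip a (u i) (u j)))"
  proof (intro sum.cong refl)
    fix i assume i: "i \<in> I"
    have "ip a (u i) ?v = ip a ?v (u i)" by (rule ip_sym)
    also have "\<dots> = (\<Sum>j\<in>I. c j * ip a (u j) (u i))"
      using assms i by (intro ip_sum_left) auto
    also have "\<dots> = (\<Sum>j\<in>I. c j * ip a (u i) (u j))" by (simp add: ip_sym)
    finally show "c i * ip a (u i) ?v = c i * (\<Sum>j\<in>I. c j * ip a (u i) (u j))" by simp
  qed
  finally show ?thesis .
qed

lemma ip_polar:
  assumes "u \<in> Ma a" "v \<in> Ma a"
  shows "ip a u v = (ip a u u + ip a v v - ip a (\<lambda>k. u k - v k) (\<lambda>k. u k - v k)) / 2"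
proof -
  have su: "summable (\<lambda>i. (a i)^2 * u i * u i)" and sv: "summable (\<lambda>i. (a i)^2 * v i * v i)"
    and suv: "summable (\<lambda>i. (a i)^2 * u i * v i)"
    using assms by (auto intro: ip_summable)
  have "ip a (\<lambda>k. u k - v k) (\<lambda>k. u k - v k)
      = (\<Sum>i. ((a i)^2 * u i * u i + (a i)^2 * v i * v i) - 2 * ((a i)^2 * u i * v i))"
    unfolding ip_def by (simp add: algebra_simps)
  also have "\<dots> = ip a u u + ip a v v - 2 * ip a u v"
  proof -
    have s2: "summable (\<lambda>i. 2 * ((a i)^2 * u i * v i))" by (rule summable_mult[OF suv])
    have "(\<Sum>i. ((a i)^2 * u i * u i + (a i)^2 * v i * v i) - 2 * ((a i)^2 * u i * v i))
       = (\<Sum>i. ((a i)^2 * u i * u i + (a i)^2 * v i * v i)) - (\<Sum>i. 2 * ((a i)^2 * u i * v i))"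
      by (rule suminf_diff[symmetric, OF summable_add[OF su sv] s2])
    also have "\<dots> = ip a u u + ip a v v - 2 * ip a u v"
      unfolding ip_def by (simp add: suminf_add[OF su sv] suminf_mult[OF suv])
    finally show ?thesis .
  qed
  finally show ?thesis by simp
qed

lemma d_a_sym: "d_a a x y = d_a a y x"
  unfolding d_a_def norm_a_def by (simp add: power2_commute)


lemma norm_a_nonneg: assumes "x \<in> Ma a" shows "norm_a a x \<ge> 0"
  using assms unfolding norm_a_def Ma_def by (simp add: suminf_nonneg)

lemma norm_a_zero:
  assumes apos: "\<And>i. a i > 0" and xM: "x \<in> Ma a" and z: "norm_a a x = 0"
  shows "x = (\<lambda>k. 0)"
proof -
  have s: "summable (\<lambda>i. (a i)^2 * (x i)^2)" using xM unfolding Ma_def by simp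
  have "(\<Sum>i. (a i)^2 * (x i)^2) = 0"
    using z suminf_nonneg[OF s] unfolding norm_a_def by simp
  then have "\<forall>i. (a i)^2 * (x i)^2 = 0"
    using suminf_eq_zero_iff[OF s] by simp
  then show ?thesis using apos by (auto intro!: ext simp: less_le)
qed

lemma partial_le_norm:
  assumes "x \<in> Ma a" and that: "finite I"
  shows "(\<Sum>i\<in>I. (a i)^2 * (x i)^2) \<le> (norm_a a x)^2"
proof -
  have s: "summable (\<lambda>i. (a i)^2 * (x i)^2)" using assms unfolding Ma_def by simp
  have "(\<Sum>i\<in>I. (a i)^2 * (x i)^2) \<le> (\<Sum>i. (a i)^2 * (x i)^2)"
    by (rule sum_le_suminf[OF s that]) simp
  also have "\<dots> = (norm_a a x)^2"
    unfolding norm_a_def using suminf_nonneg[OF s] by simp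
  finally show ?thesis .
qed

lemma norm_a_triangle:
  assumes "u \<in> Ma a" "v \<in> Ma a"
  shows "norm_a a (\<lambda>k. u k + v k) \<le> norm_a a u + norm_a a v"
proof -
  have s: "summable (\<lambda>i. (a i)^2 * (u i + v i)^2)" using Ma_add[OF assms] unfolding Ma_def by simp
  have L: "L2_set (\<lambda>i. a i * w i) {..<n} \<le> norm_a a w" if "w \<in> Ma a" for w n
  proof -
    have "L2_set (\<lambda>i. a i * w i) {..<n} = sqrt (\<Sum>i<n. (a i)^2 * (w i)^2)"
      unfolding L2_set_def by (simp add: power_mult_distrib)
    also have "\<dots> \<le> sqrt ((norm_a a w)^2)"
      by (intro real_sqrt_le_mono partial_le_norm[OF that]) simp
    also have "\<dots> = norm_a a w" using norm_a_nonneg[OF that] by simp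
    finally show ?thesis .
  qed
  have "(\<Sum>i<n. (a i)^2 * (u i + v i)^2) \<le> (norm_a a u + norm_a a v)^2" for n
  proof -
    have "(\<Sum>i<n. (a i)^2 * (u i + v i)^2) = (L2_set (\<lambda>i. a i * u i + a i * v i) {..<n})^2"
      unfolding L2_set_def
      by (simp add: sum_nonneg, intro sum.cong refl, simp add: power_mult_distrib flip: distrib_left)
    also have "\<dots> \<le> (L2_set (\<lambda>i. a i * u i) {..<n} + L2_set (\<lambda>i. a i * v i) {..<n})^2"
      by (rule power_mono[OF L2_set_triangle_ineq]) (rule L2_set_nonneg)
    also have "\<dots> \<le> (norm_a a u + norm_a a v)^2"
      by (rule power_mono[OF add_mono[OF L[OF assms(1)] L[OF assms(2)]]])
         (intro add_nonneg_nonneg L2_set_nonneg)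
    finally show ?thesis .
  qed
  then have "(\<Sum>i. (a i)^2 * (u i + v i)^2) \<le> (norm_a a u + norm_a a v)^2"
    by (intro suminf_le_const[OF s]) auto
  then have "norm_a a (\<lambda>k. u k + v k) \<le> sqrt ((norm_a a u + norm_a a v)^2)"
    unfolding norm_a_def by (rule real_sqrt_le_mono)
  also have "\<dots> = norm_a a u + norm_a a v" using norm_a_nonneg[OF assms(1)] norm_a_nonneg[OF assms(2)] by simp
  finally show ?thesis .
qed

lemma d_a_triangle:
  assumes "x \<in> Ma a" "y \<in> Ma a" "z \<in> Ma a"
  shows "d_a a x z \<le> d_a a x y + d_a a y z"
proof -
  have "d_a a x z = norm_a a (\<lambda>k. (x k - y k) + (y k - z k))"
    unfolding d_a_def by simp
  also have "\<dots> \<le> d_a a x y + d_a a y z"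
    unfolding d_a_def by (intro norm_a_triangle Ma_diff assms)
  finally show ?thesis .
qed

lemma d_a_nonneg: assumes "x \<in> Ma a" "y \<in> Ma a" shows "d_a a x y \<ge> 0"
  unfolding d_a_def by (rule norm_a_nonneg[OF Ma_diff[OF assms]])

lemma conv_Cauchy:
  assumes SM: "\<And>n. S n \<in> Ma a" and c: "conv_a a S s" and "e > 0"
  shows "\<exists>N. \<forall>m\<ge>N. \<forall>n\<ge>N. d_a a (S m) (S n) < e"
proof -
  have sM: "s \<in> Ma a" and L: "(\<lambda>n. d_a a (S n) s) \<longlonglongrightarrow> 0" using c unfolding conv_a_def by auto
  from L obtain N where N: "\<And>n. n \<ge> N \<Longrightarrow> norm (d_a a (S n) s - 0) < e/2"
    using \<open>e>0\<close> by (metis half_gt_zero LIMSEQ_D)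
  show ?thesis
  proof (intro exI allI impI)
    fix m n assume "m \<ge> N" "n \<ge> N"
    have "d_a a (S m) (S n) \<le> d_a a (S m) s + d_a a s (S n)"
      by (rule d_a_triangle[OF SM sM SM])
    also have "\<dots> = d_a a (S m) s + d_a a (S n) s" by (simp add: d_a_sym)
    also have "\<dots> < e" using N[OF \<open>m\<ge>N\<close>] N[OF \<open>n\<ge>N\<close>] by simp
    finally show "d_a a (S m) (S n) < e" .
  qed
qed

lemma Ma_complete:
  assumes apos: "\<And>i. a i > 0" and SM: "\<And>n. S n \<in> Ma a"
    and C: "\<And>e. e > 0 \<Longrightarrow> \<exists>N. \<forall>m\<ge>N. \<forall>n\<ge>N. d_a a (S m) (S n) < e"
  shows "\<exists>s. conv_a a S s"
proof -
  have pt: "a k * \<bar>S m k - S n k\<bar> \<le> d_a a (S m) (S n)" for k m n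
  proof -
    have "(\<Sum>i\<in>{k}. (a i)^2 * (S m i - S n i)^2) \<le> (d_a a (S m) (S n))^2"
      unfolding d_a_def by (rule partial_le_norm) (auto intro: Ma_diff SM)
    then have "(a k * \<bar>S m k - S n k\<bar>)^2 \<le> (d_a a (S m) (S n))^2"
      by (simp add: power_mult_distrib)
    then show ?thesis using d_a_nonneg[OF SM SM, of m n] by (meson abs_le_square_iff abs_of_nonneg order_trans abs_ge_self power2_le_imp_le)
  qed
  have conv: "convergent (\<lambda>n. S n k)" for k
  proof (rule Cauchy_convergent, rule CauchyI)
    fix e :: real assume "e > 0"
    then obtain N where N: "\<forall>m\<ge>N. \<forall>n\<ge>N. d_a a (S m) (S n) < e * a k"
      using C[of "e * a k"] apos[of k] by auto
    show "\<exists>M. \<forall>m\<ge>M. \<forall>n\<ge>M. norm (S m k - S n k) < e"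
    proof (intro exI allI impI)
      fix m n assume "m \<ge> N" "n \<ge> N"
      then have "a k * \<bar>S m k - S n k\<bar> < a k * e"
        using pt[of k m n] N by (smt (verit) mult.commute)
      then show "norm (S m k - S n k) < e" using apos[of k] by simp
    qed
  qed
  define s where "s k = lim (\<lambda>n. S n k)" for k
  have lim: "(\<lambda>n. S n k) \<longlonglongrightarrow> s k" for k
    using conv[of k] unfolding s_def convergent_LIMSEQ_iff .
  have key: "\<exists>N. \<forall>n\<ge>N. (\<lambda>k. S n k - s k) \<in> Ma a \<and> d_a a (S n) s \<le> e" if "e > 0" for e
  proof -
    obtain N where N: "\<forall>m\<ge>N. \<forall>n\<ge>N. d_a a (S m) (S n) < e" using C[OF \<open>e>0\<close>] by auto
    show ?thesis
    proof (intro exI allI impI)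
      fix n assume n: "n \<ge> N"
      have ps: "(\<Sum>k<K. (a k)^2 * (S n k - s k)^2) \<le> e^2" for K
      proof (rule LIMSEQ_le_const2)
        show "(\<lambda>m. \<Sum>k<K. (a k)^2 * (S n k - S m k)^2) \<longlonglongrightarrow> (\<Sum>k<K. (a k)^2 * (S n k - s k)^2)"
          by (intro tendsto_intros lim)
        show "\<exists>M. \<forall>m\<ge>M. (\<Sum>k<K. (a k)^2 * (S n k - S m k)^2) \<le> e^2"
        proof (intro exI allI impI)
          fix m assume m: "m \<ge> N"
          have "(\<Sum>k<K. (a k)^2 * (S n k - S m k)^2) \<le> (d_a a (S n) (S m))^2"
            unfolding d_a_def by (rule partial_le_norm) (auto intro: Ma_diff SM)
          also have "\<dots> \<le> e^2" using N n m d_a_nonneg[OF SM SM, of n m]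
            by (intro power_mono) (auto intro: less_imp_le)
          finally show "(\<Sum>k<K. (a k)^2 * (S n k - S m k)^2) \<le> e^2" .
        qed
      qed
      have sm: "summable (\<lambda>k. (a k)^2 * (S n k - s k)^2)"
        by (rule summableI_nonneg_bounded[OF _ ps]) simp
      then have A: "(\<lambda>k. S n k - s k) \<in> Ma a" unfolding Ma_def by simp
      have "(\<Sum>k. (a k)^2 * (S n k - s k)^2) \<le> e^2" by (rule suminf_le_const[OF sm ps])
      then have "d_a a (S n) s \<le> sqrt (e^2)" unfolding d_a_def norm_a_def by (rule real_sqrt_le_mono)
      then show "(\<lambda>k. S n k - s k) \<in> Ma a \<and> d_a a (S n) s \<le> e" using \<open>e>0\<close> A by simp
    qed
  qed
  obtain N where "(\<lambda>k. S N k - s k) \<in> Ma a" using key[of 1] by auto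
  from Ma_diff[OF SM this] have "(\<lambda>k. S N k - (S N k - s k)) \<in> Ma a" .
  then have sM: "s \<in> Ma a" by simp
  have "(\<lambda>n. d_a a (S n) s) \<longlonglongrightarrow> 0"
  proof (rule LIMSEQ_I)
    fix r :: real assume "r > 0"
    then obtain N where N: "\<forall>n\<ge>N. d_a a (S n) s \<le> r/2" using key[of "r/2"] by auto
    show "\<exists>no. \<forall>n\<ge>no. norm (d_a a (S n) s - 0) < r"
    proof (intro exI[of _ N] allI impI)
      fix n assume "n \<ge> N"
      then have "d_a a (S n) s \<le> r/2" using N by simp
      then show "norm (d_a a (S n) s - 0) < r" using \<open>r>0\<close> d_a_nonneg[OF SM sM, of n] by simp
    qed
  qed
  then show ?thesis using sM unfolding conv_a_def by auto
qed


lemma ip_self_d: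
  assumes "x \<in> Ma a" "y \<in> Ma a"
  shows "ip a (\<lambda>k. x k - y k) (\<lambda>k. x k - y k) = (d_a a x y)^2"
  unfolding d_a_def by (rule norm_a_sq[OF Ma_diff[OF assms], symmetric])

lemma iso_ip:
  assumes E1sub: "E1 \<subseteq> Ma a" and fE: "f ` E1 \<subseteq> Ma a"
    and isom: "\<And>x y. x \<in> E1 \<Longrightarrow> y \<in> E1 \<Longrightarrow> d_a a (f x) (f y) = d_a a x y"
    and pE1: "p \<in> E1" and z: "z \<in> E1" and w: "w \<in> E1"
  shows "ip a (\<lambda>k. f z k - f p k) (\<lambda>k. f w k - f p k) = ip a (\<lambda>k. z k - p k) (\<lambda>k. w k - p k)"
proof -
  have M: "z \<in> Ma a" "w \<in> Ma a" "p \<in> Ma a" "f z \<in> Ma a" "f w \<in> Ma a" "f p \<in> Ma a"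
    using E1sub fE z w pE1 by auto
  have e1: "(\<lambda>k. (z k - p k) - (w k - p k)) = (\<lambda>k. z k - w k)" by auto
  have e2: "(\<lambda>k. (f z k - f p k) - (f w k - f p k)) = (\<lambda>k. f z k - f w k)" by auto
  show ?thesis
    apply (subst ip_polar[OF Ma_diff[OF M(4) M(6)] Ma_diff[OF M(5) M(6)]])
    apply (subst ip_polar[OF Ma_diff[OF M(1) M(3)] Ma_diff[OF M(2) M(3)]])
    apply (simp only: e1 e2 ip_self_d M)
    using isom z w pE1 by simp
qed

lemma iso_norm:
  assumes E1sub: "E1 \<subseteq> Ma a" and fE: "f ` E1 \<subseteq> Ma a"
    and isom: "\<And>x y. x \<in> E1 \<Longrightarrow> y \<in> E1 \<Longrightarrow> d_a a (f x) (f y) = d_a a x y"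
    and pE1: "p \<in> E1" and fin: "finite I" and zE: "\<And>i. i \<in> I \<Longrightarrow> z i \<in> E1"
  shows "norm_a a (\<lambda>k. \<Sum>i\<in>I. c i * (f (z i) k - f p k)) = norm_a a (\<lambda>k. \<Sum>i\<in>I. c i * (z i k - p k))"
proof -
  have M1: "(\<lambda>k. f (z i) k - f p k) \<in> Ma a" if "i \<in> I" for i
    using that zE E1sub fE pE1 by (intro Ma_diff) auto
  have M2: "(\<lambda>k. z i k - p k) \<in> Ma a" if "i \<in> I" for i
    using that zE E1sub pE1 by (intro Ma_diff) auto
  have "ip a (\<lambda>k. \<Sum>i\<in>I. c i * (f (z i) k - f p k)) (\<lambda>k. \<Sum>i\<in>I. c i * (f (z i) k - f p k))
      = (\<Sum>i\<in>I. c i * (\<Sum>j\<in>I. c j * ip a (\<lambda>k. f (z i) k - f p k) (\<lambda>k. f (z j) k - f p k)))"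
    using norm_sum_sq[OF fin, of "\<lambda>i k. f (z i) k - f p k" a c] M1 by simp
  also have "\<dots> = (\<Sum>i\<in>I. c i * (\<Sum>j\<in>I. c j * ip a (\<lambda>k. z i k - p k) (\<lambda>k. z j k - p k)))"
    using iso_ip[OF E1sub fE isom pE1] zE by (intro sum.cong refl arg_cong2[where f="(*)"]) auto
  also have "\<dots> = ip a (\<lambda>k. \<Sum>i\<in>I. c i * (z i k - p k)) (\<lambda>k. \<Sum>i\<in>I. c i * (z i k - p k))"
    using norm_sum_sq[OF fin, of "\<lambda>i k. z i k - p k" a c] M2 by simp
  finally show ?thesis by (simp add: norm_a_ip)
qed

lemma iso_psum:
  assumes E1sub: "E1 \<subseteq> Ma a" and fE: "f ` E1 \<subseteq> Ma a"
    and isom: "\<And>x y. x \<in> E1 \<Longrightarrow> y \<in> E1 \<Longrightarrow> d_a a (f x) (f y) = d_a a x y"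
    and pE1: "p \<in> E1" and xE: "\<And>i. x i \<in> E1" and yE: "\<And>i. y i \<in> E1"
  shows "d_a a (psum \<alpha> (\<lambda>i. f (x i)) (f p) n) (psum \<beta> (\<lambda>i. f (y i)) (f p) m)
       = d_a a (psum \<alpha> x p n) (psum \<beta> y p m)"
proof -
  define z where "z = case_sum x y"
  define c where "c = case_sum \<alpha> (\<lambda>i. - \<beta> i)"
  define I where "I = {..<n} <+> {..<m}"
  have fin: "finite I" unfolding I_def by simp
  have zE: "z j \<in> E1" for j unfolding z_def using xE yE by (cases j) auto
  have e1: "(\<lambda>k. psum \<alpha> x p n k - psum \<beta> y p m k) = (\<lambda>k. \<Sum>j\<in>I. c j * (z j k - p k))"
    unfolding psum_def I_def z_def c_def
    by (rule ext, subst sum.Plus) (auto simp: sum_negf)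
  have e2: "(\<lambda>k. psum \<alpha> (\<lambda>i. f (x i)) (f p) n k - psum \<beta> (\<lambda>i. f (y i)) (f p) m k)
       = (\<lambda>k. \<Sum>j\<in>I. c j * (f (z j) k - f p k))"
    unfolding psum_def I_def z_def c_def
    by (rule ext, subst sum.Plus) (auto simp: sum_negf)
  show ?thesis unfolding d_a_def e1 e2
    by (rule iso_norm[OF E1sub fE isom pE1 fin zE])
qed


lemma exist_t:
  assumes apos: "\<And>i. a i > 0" and E1sub: "E1 \<subseteq> Ma a" and fE: "f ` E1 \<subseteq> Ma a"
    and isom: "\<And>x y. x \<in> E1 \<Longrightarrow> y \<in> E1 \<Longrightarrow> d_a a (f x) (f y) = d_a a x y"
    and pE1: "p \<in> E1" and xE: "\<And>i. x i \<in> E1"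
  shows "(\<exists>s. conv_a a (psum \<alpha> x p) s) \<longleftrightarrow> (\<exists>t. conv_a a (psum \<alpha> (\<lambda>i. f (x i)) (f p)) t)"
proof -
  have SM: "psum \<alpha> x p n \<in> Ma a" for n using E1sub xE pE1 by (intro psum_Ma) auto
  have TM: "psum \<alpha> (\<lambda>i. f (x i)) (f p) n \<in> Ma a" for n using E1sub fE xE pE1 by (intro psum_Ma) auto
  have eq: "d_a a (psum \<alpha> (\<lambda>i. f (x i)) (f p) m) (psum \<alpha> (\<lambda>i. f (x i)) (f p) n)
      = d_a a (psum \<alpha> x p m) (psum \<alpha> x p n)" for m n
    by (rule iso_psum[OF E1sub fE isom pE1 xE xE])
  show ?thesis
  proof
    assume "\<exists>s. conv_a a (psum \<alpha> x p) s"
    then obtain s where s: "conv_a a (psum \<alpha> x p) s" by auto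
    show "\<exists>t. conv_a a (psum \<alpha> (\<lambda>i. f (x i)) (f p)) t"
      by (rule Ma_complete[OF apos TM]) (simp only: eq, rule conv_Cauchy[OF SM s])
  next
    assume "\<exists>t. conv_a a (psum \<alpha> (\<lambda>i. f (x i)) (f p)) t"
    then obtain t where t: "conv_a a (psum \<alpha> (\<lambda>i. f (x i)) (f p)) t" by auto
    show "\<exists>s. conv_a a (psum \<alpha> x p) s"
      by (rule Ma_complete[OF apos SM]) (simp only: eq[symmetric], rule conv_Cauchy[OF TM t])
  qed
qed

lemma unique_t:
  assumes apos: "\<And>i. a i > 0" and E1sub: "E1 \<subseteq> Ma a" and fE: "f ` E1 \<subseteq> Ma a"
    and isom: "\<And>x y. x \<in> E1 \<Longrightarrow> y \<in> E1 \<Longrightarrow> d_a a (f x) (f y) = d_a a x y"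
    and pE1: "p \<in> E1" and xE: "\<And>i. x i \<in> E1" and yE: "\<And>i. y i \<in> E1"
    and cs: "conv_a a (psum \<alpha> x p) s" and cs': "conv_a a (psum \<beta> y p) s"
    and ct: "conv_a a (psum \<alpha> (\<lambda>i. f (x i)) (f p)) t"
    and ct': "conv_a a (psum \<beta> (\<lambda>i. f (y i)) (f p)) t'"
  shows "t = t'"
proof -
  let ?S = "psum \<alpha> x p" and ?S' = "psum \<beta> y p"
  let ?T = "psum \<alpha> (\<lambda>i. f (x i)) (f p)" and ?T' = "psum \<beta> (\<lambda>i. f (y i)) (f p)"
  have SM: "?S n \<in> Ma a" "?S' n \<in> Ma a" for n using E1sub xE yE pE1 by (auto intro!: psum_Ma)
  have TM: "?T n \<in> Ma a" "?T' n \<in> Ma a" for n using E1sub fE xE yE pE1 by (auto intro!: psum_Ma)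
  have sM: "s \<in> Ma a" and tM: "t \<in> Ma a" "t' \<in> Ma a" using cs ct ct' unfolding conv_a_def by auto
  have L: "(\<lambda>n. d_a a (?T n) t + (d_a a (?S n) s + d_a a (?S' n) s) + d_a a (?T' n) t') \<longlonglongrightarrow> 0 + (0 + 0) + 0"
    using cs cs' ct ct' unfolding conv_a_def by (intro tendsto_intros) auto
  have le: "d_a a t t' \<le> d_a a (?T n) t + (d_a a (?S n) s + d_a a (?S' n) s) + d_a a (?T' n) t'" for n
  proof -
    have "d_a a t t' \<le> d_a a t (?T n) + d_a a (?T n) t'" by (rule d_a_triangle[OF tM(1) TM(1) tM(2)])
    also have "d_a a (?T n) t' \<le> d_a a (?T n) (?T' n) + d_a a (?T' n) t'"
      by (rule d_a_triangle[OF TM(1) TM(2) tM(2)])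
    also have "d_a a (?T n) (?T' n) = d_a a (?S n) (?S' n)"
      by (rule iso_psum[OF E1sub fE isom pE1 xE yE])
    also have "\<dots> \<le> d_a a (?S n) s + d_a a s (?S' n)" by (rule d_a_triangle[OF SM(1) sM SM(2)])
    finally show ?thesis by (simp add: d_a_sym)
  qed
  have "d_a a t t' \<le> 0" using LIMSEQ_le_const[OF L] le by simp
  then have "norm_a a (\<lambda>k. t k - t' k) = 0" using d_a_nonneg[OF tM] unfolding d_a_def by simp
  from norm_a_zero[OF apos Ma_diff[OF tM] this] show ?thesis by (auto intro!: ext dest: fun_cong)
qed


theorem theorem3p16:
  fixes a :: "nat \<Rightarrow> real" and E1 E2 :: "(nat \<Rightarrow> real) set"
    and f :: "(nat \<Rightarrow> real) \<Rightarrow> (nat \<Rightarrow> real)" and p :: "nat \<Rightarrow> real"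
  assumes apos: "\<And>i. a i > 0"
    and asum: "summable (\<lambda>i. (a i)^2)"
    and E1sub: "E1 \<subseteq> Ma a" and E2sub: "E2 \<subseteq> Ma a"
    and E1ne: "E1 \<noteq> {}" and E2ne: "E2 \<noteq> {}"
    and E1bd: "bounded_a a E1" and E2bd: "bounded_a a E2"
    and surj: "f ` E1 = E2"
    and isom: "\<And>x y. x \<in> E1 \<Longrightarrow> y \<in> E1 \<Longrightarrow> d_a a (f x) (f y) = d_a a x y"
    and pE1: "p \<in> E1"
  shows "Fmap a f E1 p ` GS a E1 p = GS a E2 (f p)"
proof -
  have fE: "f ` E1 \<subseteq> Ma a" using surj E2sub by simp
  have pM: "p \<in> Ma a" and qM: "f p \<in> Ma a" using pE1 E1sub fE by auto
  have Fm: "Fmap a f E1 p (\<lambda>k. p k + s k) = (\<lambda>k. f p k + t k)"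
    if xE: "\<And>i. x i \<in> E1" and cs: "conv_a a (psum \<alpha> x p) s"
      and ct: "conv_a a (psum \<alpha> (\<lambda>i. f (x i)) (f p)) t" for x \<alpha> s t
    unfolding Fmap_def
  proof (rule the_equality)
    show "\<exists>x' \<alpha>' s' t'. (\<forall>i. x' i \<in> E1) \<and> conv_a a (psum \<alpha>' x' p) s' \<and>
        (\<lambda>k. p k + s k) = (\<lambda>k. p k + s' k) \<and>
        conv_a a (psum \<alpha>' (\<lambda>i. f (x' i)) (f p)) t' \<and> (\<lambda>k. f p k + t k) = (\<lambda>k. f p k + t' k)"
      using xE cs ct by blast
  next
    fix z assume "\<exists>x' \<alpha>' s' t'. (\<forall>i. x' i \<in> E1) \<and> conv_a a (psum \<alpha>' x' p) s' \<and>
        (\<lambda>k. p k + s k) = (\<lambda>k. p k + s' k) \<and>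
        conv_a a (psum \<alpha>' (\<lambda>i. f (x' i)) (f p)) t' \<and> z = (\<lambda>k. f p k + t' k)"
    then obtain x' \<alpha>' s' t' where x'E: "\<forall>i. x' i \<in> E1" and cs': "conv_a a (psum \<alpha>' x' p) s'"
      and ye: "(\<lambda>k. p k + s k) = (\<lambda>k. p k + s' k)"
      and ct': "conv_a a (psum \<alpha>' (\<lambda>i. f (x' i)) (f p)) t'" and z: "z = (\<lambda>k. f p k + t' k)"
      by blast
    from ye have "\<forall>k. p k + s k = p k + s' k" by (simp add: fun_eq_iff)
    then have "s' = s" by (simp add: fun_eq_iff)
    then have cs2: "conv_a a (psum \<alpha>' x' p) s" using cs' by simp
    have x'E2: "\<And>i. x' i \<in> E1" using x'E by blast
    have "t = t'"
      by (rule unique_t[OF apos E1sub fE isom pE1 xE x'E2 cs cs2 ct ct'])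
    then show "z = (\<lambda>k. f p k + t k)" using z by simp
  qed
  show ?thesis
  proof
    show "Fmap a f E1 p ` GS a E1 p \<subseteq> GS a E2 (f p)"
    proof
      fix w assume "w \<in> Fmap a f E1 p ` GS a E1 p"
      then obtain y where yG: "y \<in> GS a E1 p" and w: "w = Fmap a f E1 p y" by auto
      then obtain x \<alpha> s where xE: "\<forall>i. x i \<in> E1" and cs: "conv_a a (psum \<alpha> x p) s"
        and y: "y = (\<lambda>k. p k + s k)" unfolding GS_def by blast
      obtain t where ct: "conv_a a (psum \<alpha> (\<lambda>i. f (x i)) (f p)) t"
        using exist_t[OF apos E1sub fE isom pE1, of x \<alpha>] xE cs by auto
      have w': "w = (\<lambda>k. f p k + t k)" using Fm[of x \<alpha> s t] xE cs ct w y by simp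
      have tM: "t \<in> Ma a" using ct unfolding conv_a_def by simp
      have fxE: "\<forall>i. f (x i) \<in> E2" using xE surj by blast
      show "w \<in> GS a E2 (f p)" unfolding GS_def w'
        apply (rule CollectI, rule conjI, rule Ma_add[OF qM tM])
        apply (rule exI[of _ "\<lambda>i. f (x i)"], rule exI[of _ \<alpha>], rule exI[of _ t])
        using ct fxE by simp
    qed
  next
    show "GS a E2 (f p) \<subseteq> Fmap a f E1 p ` GS a E1 p"
    proof
      fix w assume "w \<in> GS a E2 (f p)"
      then obtain x' \<alpha> t where x'E: "\<forall>i. x' i \<in> E2" and ct': "conv_a a (psum \<alpha> x' (f p)) t"
        and w: "w = (\<lambda>k. f p k + t k)" unfolding GS_def by blast
      define x where "x i = inv_into E1 f (x' i)" for i
      have xE: "x i \<in> E1" for i unfolding x_def using x'E surj by (auto intro: inv_into_into)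
      have fx: "(\<lambda>i. f (x i)) = x'"
      proof (rule ext)
        fix i have "x' i \<in> f ` E1" using x'E surj by blast
        then show "f (x i) = x' i" unfolding x_def by (rule f_inv_into_f)
      qed
      have ct: "conv_a a (psum \<alpha> (\<lambda>i. f (x i)) (f p)) t" using ct' fx by simp
      obtain s where cs: "conv_a a (psum \<alpha> x p) s"
        using exist_t[OF apos E1sub fE isom pE1, of x \<alpha>] xE ct by auto
      have sM: "s \<in> Ma a" using cs unfolding conv_a_def by simp
      have yG: "(\<lambda>k. p k + s k) \<in> GS a E1 p" unfolding GS_def
        apply (rule CollectI, rule conjI, rule Ma_add[OF pM sM])
        apply (rule exI[of _ x], rule exI[of _ \<alpha>], rule exI[of _ s])
        using cs xE by simp
      have "Fmap a f E1 p (\<lambda>k. p k + s k) = w" using Fm[OF _ cs ct] xE w by simp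
      then show "w \<in> Fmap a f E1 p ` GS a E1 p" using yG by (auto intro: rev_image_eqI)
    qed
  qed
qed

end
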